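(* Let $x \in \mathbb{Z}$ and let $m \in \mathbb{N}$ be odd with $m \geq 3$. Suppose $\left\lfloor \frac{x^2+7}{4} \right\rfloor = 2^m$. Then, in the ring of integers $\mathcal{O}_K$ of $K = \mathbb{Q}(\sqrt{-7})$, we have $1 - 2\theta = \theta^m - \theta'^m$, where $\theta = \frac{1+\sqrt{-7}}{2}$ and $\theta' = 1-\theta = \frac{1-\sqrt{-7}}{2}$ (equivalently, $-\sqrt{-7} = \theta^m - \theta'^m$).
   Context: $K = \mathbb{Q}(\sqrt{-7})$ with a fixed square root $\sqrt{-7}$; $\theta = \frac{1+\sqrt{-7}}{2}$ is the root of $X^2 - X + 2$, which lies in $\mathcal{O}_K$, and $\theta' = 1 - \theta$. The quotient $\lfloor\cdot\rfloor$ denotes integer (floor) division, as in the formal statement. *)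

theory Defs
  imports Complex_Main
begin

text \<open>We work inside the complex numbers, into which O_K embeds (K = Q(sqrt(-7))),
  with the fixed square root sqrt(-7) = i * sqrt 7.\<close>

definition sqrt_m7 :: complex where
  "sqrt_m7 = \<i> * complex_of_real (sqrt 7)"

definition theta :: complex where
  "theta = (1 + sqrt_m7) / 2"

definition theta' :: complex where
  "theta' = 1 - theta"

end

theory Submission
  imports Defs
begin

lemma s2: "sqrt_m7^2 = -7"
  by (simp add: sqrt_m7_def power_mult_distrib flip: of_real_power)

lemma th_def2: "theta' = (1 - sqrt_m7)/2"
  by (simp add: theta'_def theta_def field_simps)

lemma th_sq: "theta^2 = theta - 2"
  using s2 by (simp add: theta_def power2_eq_square field_simps)

lemma thp_sq: "theta'^2 = theta' - 2"
  using s2 by (simp add: th_def2 power2_eq_square field_simps)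

lemma th_prod: "theta * theta' = 2"
  using s2 by (simp add: th_def2 theta_def power2_eq_square field_simps)

lemma Im_th: "Im theta = sqrt 7 / 2" and Re_th: "Re theta = 1/2"
  by (simp_all add: theta_def sqrt_m7_def)

lemma cnj_th: "cnj theta = theta'"
  by (simp add: theta_def th_def2 sqrt_m7_def)

lemma cnj_thp: "cnj theta' = theta"
  by (simp add: theta_def th_def2 sqrt_m7_def)

lemma coord_eq:
  assumes "of_int a + of_int b * theta = of_int c + of_int d * theta"
  shows "a = c \<and> b = d"
proof -
  have "Im (of_int a + of_int b * theta) = Im (of_int c + of_int d * theta)" using assms by simp
  hence "b = d" by (simp add: Im_th)
  moreover have "Re (of_int a + of_int b * theta) = Re (of_int c + of_int d * theta)" using assms by simp
  ultimately show ?thesis by (simp add: Re_th)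
qed

lemma th_pow_coord: "\<exists>c d::int. theta^k = of_int c + of_int d * theta"
proof (induction k)
  case 0 then show ?case by (rule exI[of _ 1], rule exI[of _ 0]) simp
next
  case (Suc k)
  then obtain c d where h: "theta^k = of_int c + of_int d * theta" by blast
  have "theta^Suc k = of_int c * theta + of_int d * theta^2" by (simp add: h algebra_simps power2_eq_square)
  also have "\<dots> = of_int (-2*d) + of_int (c+d) * theta" by (simp add: th_sq algebra_simps)
  finally show ?case by blast
qed

lemma thp_pow_coord: "\<exists>c d::int. theta'^k = of_int c + of_int d * theta"
proof (induction k)
  case 0 then show ?case by (rule exI[of _ 1], rule exI[of _ 0]) simp
next
  case (Suc k)
  then obtain c d where h: "theta'^k = of_int c + of_int d * theta" by blast
  have "theta'^Suc k = (of_int c + of_int d * theta) * (1 - theta)" by (metis h power_Suc2 theta'_def)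
  also have "\<dots> = of_int c + of_int d * theta - of_int c * theta - of_int d * theta^2"
    by (simp add: algebra_simps power2_eq_square)
  also have "\<dots> = of_int (c + 2*d) + of_int (-c) * theta" by (simp add: th_sq algebra_simps)
  finally show ?case by blast
qed

lemma key: "\<forall>u v::int. u^2+u*v+2*v^2 = 2^m \<and> \<not>(even u \<and> even v) \<longrightarrow>
   (of_int u + of_int v * theta \<in> {theta^m, -(theta^m), theta'^m, -(theta'^m)})"
proof (induction m)
  case 0
  show ?case
  proof (intro allI impI)
    fix u v :: int assume a: "u^2+u*v+2*v^2 = 2^0 \<and> \<not>(even u \<and> even v)"
    have e: "(2*u+v)^2 + 7*v^2 = 4" using a by (simp add: power2_eq_square algebra_simps)
    have "v^2 \<le> 0"
    proof (rule ccontr)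
      assume "\<not> v^2 \<le> 0"
      hence "v^2 \<ge> 1" by linarith
      thus False using e by (smt (verit) zero_le_power2)
    qed
    hence "v = 0" by simp
    hence "u^2 = 1" using a by simp
    hence "u = 1 \<or> u = -1" using power2_eq_1_iff by blast
    thus "of_int u + of_int v * theta \<in> {theta^0, -(theta^0), theta'^0, -(theta'^0)}"
      using \<open>v = 0\<close> by auto
  qed
next
  case (Suc m)
  show ?case
  proof (intro allI impI)
    fix u v :: int assume a: "u^2+u*v+2*v^2 = 2^Suc m \<and> \<not>(even u \<and> even v)"
    have ev: "even (u^2+u*v+2*v^2)" using a by simp
    have uv: "even u \<or> even (u+v)"
    proof (rule ccontr)
      assume "\<not> (even u \<or> even (u+v))"
      hence "odd u" "even v" by auto
      thus False using ev by simp
    qed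
    let ?a = "of_int u + of_int v * theta :: complex"
    show "?a \<in> {theta^Suc m, -(theta^Suc m), theta'^Suc m, -(theta'^Suc m)}"
    proof (cases "even u")
      case True
      then obtain k where k: "u = 2*k" by blast
      define p where "p = v + k"
      define q where "q = -k"
      have u': "u = -2*q" and v': "v = p + q" by (simp_all add: p_def q_def k)
      have N: "p^2+p*q+2*q^2 = 2^m" using a unfolding u' v'
        by (simp add: power2_eq_square algebra_simps)
      have ne: "\<not>(even p \<and> even q)"
      proof
        assume "even p \<and> even q"
        then obtain p1 q1 where "p = 2*p1" "q = 2*q1" by blast
        thus False using a unfolding u' v' by auto
      qed
      have fact: "?a = theta * (of_int p + of_int q * theta)"
      proof -
        have "theta * (of_int p + of_int q * theta) = of_int p * theta + of_int q * (theta*theta)"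
          by (simp add: algebra_simps)
        also have "\<dots> = of_int p * theta + of_int q * (theta - 2)" using th_sq by (simp add: power2_eq_square)
        finally show ?thesis unfolding u' v' by (simp add: algebra_simps)
      qed
      have IH: "of_int p + of_int q * theta \<in> {theta^m, -(theta^m), theta'^m, -(theta'^m)}"
        using Suc.IH N ne by blast
      show ?thesis
      proof (cases "m = 0")
        case True
        then show ?thesis using IH fact by auto
      next
        case False
        then obtain j where j: "m = Suc j" by (cases m) auto
        obtain c d where cd: "theta'^j = of_int c + of_int d * theta" using thp_pow_coord by blast
        have t2: "theta * theta'^m = of_int (2*c) + of_int (2*d) * theta"
        proof -
          have "theta * theta'^m = (theta * theta') * theta'^j" by (simp add: j)
          thus ?thesis by (simp add: th_prod cd algebra_simps)
        qed
        have "?a \<noteq> theta * theta'^m"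
        proof
          assume "?a = theta * theta'^m"
          hence "u = 2*c \<and> v = 2*d" using t2 coord_eq by metis
          thus False using a by auto
        qed
        moreover have "?a \<noteq> -(theta * theta'^m)"
        proof
          assume "?a = -(theta * theta'^m)"
          hence "?a = of_int (-2*c) + of_int (-2*d) * theta" using t2 by simp
          hence "u = -2*c \<and> v = -2*d" using coord_eq by blast
          thus False using a by auto
        qed
        ultimately show ?thesis using IH fact by auto
      qed
    next
      case False
      hence ev2: "even (u+v)" using uv by simp
      then obtain k where k: "u + v = 2*k" by blast
      define p where "p = -v"
      define q where "q = k"
      have u': "u = p + 2*q" and v': "v = -p" using k by (simp_all add: p_def q_def)
      have N: "p^2+p*q+2*q^2 = 2^m" using a unfolding u' v'
        by (simp add: power2_eq_square algebra_simps)
      have ne: "\<not>(even p \<and> even q)"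
      proof
        assume "even p \<and> even q"
        then obtain p1 q1 where "p = 2*p1" "q = 2*q1" by blast
        thus False using a unfolding u' v' by auto
      qed
      have fact: "?a = theta' * (of_int p + of_int q * theta)"
      proof -
        have "theta' * (of_int p + of_int q * theta) = of_int p + of_int q * theta - of_int p * theta - of_int q * (theta*theta)"
          by (simp add: theta'_def algebra_simps)
        also have "\<dots> = of_int p + of_int q * theta - of_int p * theta - of_int q * (theta - 2)" using th_sq by (simp add: power2_eq_square)
        finally show ?thesis unfolding u' v' by (simp add: algebra_simps)
      qed
      have IH: "of_int p + of_int q * theta \<in> {theta^m, -(theta^m), theta'^m, -(theta'^m)}"
        using Suc.IH N ne by blast
      show ?thesis
      proof (cases "m = 0")
        case True
        then show ?thesis using IH fact by auto
      next
        case False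
        then obtain j where j: "m = Suc j" by (cases m) auto
        obtain c d where cd: "theta^j = of_int c + of_int d * theta" using th_pow_coord by blast
        have t2: "theta' * theta^m = of_int (2*c) + of_int (2*d) * theta"
        proof -
          have "theta' * theta^m = (theta * theta') * theta^j" by (simp add: j)
          thus ?thesis by (simp add: th_prod cd algebra_simps)
        qed
        have "?a \<noteq> theta' * theta^m"
        proof
          assume "?a = theta' * theta^m"
          hence "u = 2*c \<and> v = 2*d" using t2 coord_eq by metis
          thus False using a by auto
        qed
        moreover have "?a \<noteq> -(theta' * theta^m)"
        proof
          assume "?a = -(theta' * theta^m)"
          hence "?a = of_int (-2*c) + of_int (-2*d) * theta" using t2 by simp
          hence "u = -2*c \<and> v = -2*d" using coord_eq by blast
          thus False using a by auto
        qed
        ultimately show ?thesis using IH fact by auto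
      qed
    qed
  qed
qed

fun b :: "nat \<Rightarrow> int" where
  "b 0 = 0" | "b (Suc 0) = 1" | "b (Suc (Suc n)) = b (Suc n) - 2 * b n"

lemma b_eq: "theta^n - theta'^n = of_int (b n) * (theta - theta')"
proof (induction n rule: b.induct)
  case 1 then show ?case by simp
next
  case 2 then show ?case by simp
next
  case (3 n)
  have "theta^Suc (Suc n) = theta^n * theta^2" by (simp add: power2_eq_square)
  also have "\<dots> = theta^Suc n - 2 * theta^n" by (simp add: th_sq algebra_simps)
  finally have A: "theta^Suc (Suc n) = theta^Suc n - 2 * theta^n" .
  have "theta'^Suc (Suc n) = theta'^n * theta'^2" by (simp add: power2_eq_square)
  also have "\<dots> = theta'^Suc n - 2 * theta'^n" by (simp add: thp_sq algebra_simps)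
  finally have B: "theta'^Suc (Suc n) = theta'^Suc n - 2 * theta'^n" .
  have "theta^Suc(Suc n) - theta'^Suc(Suc n) = (theta^Suc n - theta'^Suc n) - 2*(theta^n - theta'^n)"
    by (simp only: A B) (simp add: algebra_simps)
  also have "\<dots> = of_int (b (Suc n)) * (theta - theta') - 2 * (of_int (b n) * (theta - theta'))"
    by (simp only: 3)
  finally show ?case by (simp add: algebra_simps)
qed

lemma b_mod: "n \<ge> 1 \<Longrightarrow> b (2*n) mod 4 = 1 \<and> b (2*n+1) mod 4 = 3"
proof (induction n rule: dec_induct)
  case base then show ?case by (simp add: numeral_eq_Suc)
next
  case (step n)
  have e1: "2 * Suc n = Suc (Suc (2*n))" by simp
  have e2: "2 * Suc n + 1 = Suc (Suc (2*n+1))" by simp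
  have "b (2 * Suc n) = b (2*n+1) - 2 * b (2*n)" unfolding e1 by simp
  hence X: "b (2 * Suc n) mod 4 = 1" using step.IH by presburger
  have "b (2 * Suc n + 1) = b (2 * Suc n) - 2 * b (2*n+1)" unfolding e2 by (simp add: e1)
  hence "b (2 * Suc n + 1) mod 4 = 3" using step.IH X by presburger
  with X show ?case by simp
qed

theorem mainTheorem2:
  fixes x :: int and m :: nat
  assumes "odd m" and "m \<ge> 3" and "(x^2 + 7) div 4 = 2^m"
  shows "1 - 2 * theta = theta ^ m - theta' ^ m"
proof -
  have m4: "(4::int) dvd 2^m"
  proof -
    have "m = 2 + (m-2)" using assms(2) by simp
    hence "(2::int)^m = 2^2 * 2^(m-2)" by (metis power_add)
    thus ?thesis by simp
  qed
  have xo: "odd x"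
  proof
    assume "even x"
    then obtain y where y: "x = 2*y" by blast
    have "(x^2+7) div 4 = y^2 + 1" unfolding y by (simp add: power2_eq_square)
    hence e: "y^2 + 1 = 2^m" using assms(3) by simp
    hence "even (y^2+1)" using m4 by (metis dvd_trans even_numeral dvd_mult_right) 
    hence "odd y" by simp
    then obtain k where "y = 2*k+1" by (metis oddE)
    hence "y^2 + 1 = 4*(k^2+k) + 2" by (simp add: power2_eq_square algebra_simps)
    thus False using e m4 by presburger
  qed
  then obtain u where u: "x = 2*u+1" by (metis oddE)
  have "(x^2+7) div 4 = u^2+u*1+2*1^2" unfolding u by (simp add: power2_eq_square algebra_simps)
  hence N: "u^2+u*1+2*1^2 = 2^m" using assms(3) by simp
  have mem: "of_int u + of_int 1 * theta \<in> {theta^m, -(theta^m), theta'^m, -(theta'^m)}"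
    using key N by fastforce
  let ?a = "of_int u + theta :: complex"
  have ca: "cnj ?a = of_int u + theta'" by (simp add: cnj_th)
  have diff: "?a - cnj ?a = theta - theta'" using ca by simp
  have ne: "theta - theta' \<noteq> 0"
  proof
    assume "theta - theta' = 0"
    hence "Im (theta - theta') = 0" by simp
    thus False by (simp add: theta'_def Im_th)
  qed
  have ct: "cnj(theta^m) = theta'^m" by (simp add: cnj_th)
  have ct': "cnj(theta'^m) = theta^m" by (simp add: cnj_thp)
  from mem have "?a = theta^m \<or> ?a = -(theta^m) \<or> ?a = theta'^m \<or> ?a = -(theta'^m)" by simp
  hence "theta^m - theta'^m = theta - theta' \<or> theta^m - theta'^m = -(theta - theta')"
  proof (elim disjE)
    assume h: "?a = theta^m"
    have "theta - theta' = theta^m - cnj (theta^m)" using diff h by simp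
    thus ?thesis using ct by simp
  next
    assume h: "?a = -(theta^m)"
    have "theta - theta' = -(theta^m) - cnj (-(theta^m))" using diff h by simp
    thus ?thesis using ct by simp
  next
    assume h: "?a = theta'^m"
    have "theta - theta' = theta'^m - cnj (theta'^m)" using diff h by simp
    thus ?thesis using ct' by simp
  next
    assume h: "?a = -(theta'^m)"
    have "theta - theta' = -(theta'^m) - cnj (-(theta'^m))" using diff h by simp
    thus ?thesis using ct' by simp
  qed
  hence "of_int (b m) * (theta - theta') = 1 * (theta - theta') \<or> of_int (b m) * (theta - theta') = (-1) * (theta - theta')"
    using b_eq[of m] by simp
  hence "of_int (b m) = (1::complex) \<or> of_int (b m) = (-1::complex)"
    using ne mult_right_cancel by blast
  hence b1: "b m = 1 \<or> b m = -1"
    by (metis of_int_eq_1_iff of_int_eq_iff of_int_minus of_int_1)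
  obtain n where n: "m = 2*n+1" "n \<ge> 1" using assms(1,2) by (metis oddE le_add1 Suc_leI not_less_eq_eq numeral_3_eq_3 add_0 mult_0_right le_0_eq Suc_eq_plus1 One_nat_def less_imp_le_nat linorder_not_less nat_le_linear)
  have "b m mod 4 = 3" using b_mod[OF n(2)] n(1) by simp
  hence "b m = -1" using b1 by auto
  hence "theta^m - theta'^m = -(theta - theta')" using b_eq[of m] by simp
  thus ?thesis by (simp add: theta'_def)
qed

end
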